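(* Let $f_1=(a_1,\lambda_1),\dots,f_p=(a_p,\lambda_p)\in\mathcal{H}(n,\mathbb{C})\setminus\mathcal{SR}_n$ and let $G$ be the subgroup of $\mathcal{H}(n,\mathbb{C})$ generated by $f_1,\dots,f_p$. Then $E_G$ is the complex affine subspace of $\mathbb{C}^n$ generated by $\{a_1,\dots,a_p\}$.
   Context: $\mathcal{H}(n,\mathbb{C})$ is the group of maps $z\mapsto\lambda z+b$ of $\mathbb{C}^n$ with $\lambda\in\mathbb{C}^*$, $b\in\mathbb{C}^n$; $\mathcal{T}_n$ = translations. For $a\in\mathbb{C}^n$, $\lambda\in\mathbb{C}\setminus\{0,1\}$, $(a,\lambda)$ denotes $z\mapsto\lambda(z-a)+a$, with unique fixed point (center) $a$. $H_2=(\frac{\pi}{2}+\pi\mathbb{Z})\cup\pi\mathbb{Z}$, $F_2=\{e^{ix}:x\in H_2\}$, $H_3=(\frac{\pi}{3}+\pi\mathbb{Z})\cup(-\frac{\pi}{3}+\pi\mathbb{Z})\cup\pi\mathbb{Z}$, $F_3=\{e^{ix}:x\in H_3\}$; $\mathcal{S}_i\mathcal{R}_n=\{z\mapsto\lambda z+b:\lambda\in F_i, b\in\mathbb{C}^n\}$, $\mathcal{SR}_n=\mathcal{S}_2\mathcal{R}_n\cup\mathcal{S}_3\mathcal{R}_n$. For a subgroup $G$, $\Gamma_G$ is the set of centers of elements of $G\setminus\mathcal{T}_n$ and $E_G$ is the smallest complex affine subspace of $\mathbb{C}^n$ containing $\Gamma_G$. *)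

theory Defs
  imports "HOL-Analysis.Analysis"
begin

text \<open>Points of C^n are modelled as complex^'n (n = CARD('n)).\<close>

definition affmap :: "complex \<Rightarrow> complex^'n \<Rightarrow> (complex^'n \<Rightarrow> complex^'n)" where
  "affmap lam b = (\<lambda>z. lam *s z + b)"

definition Hgrp :: "(complex^'n \<Rightarrow> complex^'n) set" where
  "Hgrp = {affmap lam b | lam b. lam \<noteq> 0}"

definition Transl :: "(complex^'n \<Rightarrow> complex^'n) set" where
  "Transl = {affmap 1 b | b. True}"

definition homot :: "complex^'n \<Rightarrow> complex \<Rightarrow> (complex^'n \<Rightarrow> complex^'n)" where
  "homot a lam = (\<lambda>z. lam *s (z - a) + a)"

definition H2 :: "real set" where
  "H2 = {x. \<exists>k::int. x = pi/2 + pi * of_int k} \<union> {x. \<exists>k::int. x = pi * of_int k}"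

definition H3 :: "real set" where
  "H3 = {x. \<exists>k::int. x = pi/3 + pi * of_int k} \<union> {x. \<exists>k::int. x = - pi/3 + pi * of_int k}
        \<union> {x. \<exists>k::int. x = pi * of_int k}"

definition F2 :: "complex set" where "F2 = (\<lambda>x. exp (\<i> * of_real x)) ` H2"
definition F3 :: "complex set" where "F3 = (\<lambda>x. exp (\<i> * of_real x)) ` H3"

definition S2R :: "(complex^'n \<Rightarrow> complex^'n) set" where
  "S2R = {affmap lam b | lam b. lam \<in> F2}"
definition S3R :: "(complex^'n \<Rightarrow> complex^'n) set" where
  "S3R = {affmap lam b | lam b. lam \<in> F3}"
definition SR :: "(complex^'n \<Rightarrow> complex^'n) set" where
  "SR = S2R \<union> S3R"

inductive_set gen_group :: "('a \<Rightarrow> 'a) set \<Rightarrow> ('a \<Rightarrow> 'a) set" for S where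
  gen_id: "id \<in> gen_group S"
| gen_base: "f \<in> S \<Longrightarrow> f \<in> gen_group S"
| gen_inv: "f \<in> gen_group S \<Longrightarrow> inv f \<in> gen_group S"
| gen_comp: "f \<in> gen_group S \<Longrightarrow> g \<in> gen_group S \<Longrightarrow> f \<circ> g \<in> gen_group S"

definition Gamma :: "(complex^'n \<Rightarrow> complex^'n) set \<Rightarrow> (complex^'n) set" where
  "Gamma G = {c. \<exists>g\<in>G - Transl. g c = c}"

definition caffine :: "(complex^'n) set \<Rightarrow> bool" where
  "caffine S \<longleftrightarrow> (\<forall>x\<in>S. \<forall>y\<in>S. \<forall>u::complex. (1 - u) *s x + u *s y \<in> S)"

definition E_of :: "(complex^'n \<Rightarrow> complex^'n) set \<Rightarrow> (complex^'n) set" where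
  "E_of G = caffine hull (Gamma G)"

end

theory Submission
  imports Defs
begin

lemma homot_affmap: "homot a l = affmap l ((1 - l) *s a)"
  by (rule ext) (simp add: homot_def affmap_def vec_eq_iff algebra_simps)

lemma affmap_comp: "affmap l b \<circ> affmap m c = affmap (l*m) (l *s c + b)"
  by (rule ext) (simp add: affmap_def vec_eq_iff algebra_simps)

lemma affmap_inv:
  assumes "l \<noteq> 0"
  shows "inv (affmap l b) = affmap (1/l) (- ((1/l) *s b))"
proof (rule inv_unique_comp)
  show "affmap l b \<circ> affmap (1 / l) (- ((1 / l) *s b)) = id"
    using assms by (intro ext) (simp add: affmap_def vec_eq_iff field_simps)
  show "affmap (1 / l) (- ((1 / l) *s b)) \<circ> affmap l b = id"
    using assms by (intro ext) (simp add: affmap_def vec_eq_iff field_simps)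
qed

lemma affmap_id: "id = affmap 1 0"
  by (rule ext) (simp add: affmap_def)

lemma gen_empty: "g \<in> gen_group {} \<Longrightarrow> g = id"
  by (induction rule: gen_group.induct) (auto simp: inv_id)

lemma caffine_hull: "caffine (caffine hull S)"
  by (rule hull_in) (auto simp: caffine_def)

lemma homot_in:
  assumes "caffine A" "a \<in> A" "l \<noteq> 0"
  shows "homot a l x \<in> A \<longleftrightarrow> x \<in> A"
proof
  assume h: "homot a l x \<in> A"
  have "x = (1 - 1/l) *s a + (1/l) *s homot a l x"
    using assms(3) by (simp add: homot_def vec_eq_iff field_simps)
  then show "x \<in> A" using assms(1,2) h unfolding caffine_def by metis
next
  assume h: "x \<in> A"
  have "homot a l x = (1 - l) *s a + l *s x"
    by (simp add: homot_def vec_eq_iff algebra_simps)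
  then show "homot a l x \<in> A" using assms(1,2) h unfolding caffine_def by metis
qed

lemma gen_inv_prop:
  assumes "g \<in> gen_group S"
    and "\<And>f. f \<in> S \<Longrightarrow> (\<exists>l b. l \<noteq> 0 \<and> f = affmap l b) \<and> (\<forall>x. f x \<in> A \<longleftrightarrow> x \<in> A)"
  shows "(\<exists>l b. l \<noteq> 0 \<and> g = affmap l b) \<and> (\<forall>x. g x \<in> A \<longleftrightarrow> x \<in> A)"
  using assms(1)
proof (induction rule: gen_group.induct)
  case gen_id
  then show ?case by (metis affmap_id id_apply zero_neq_one)
next
  case (gen_base f)
  then show ?case using assms(2) by blast
next
  case (gen_inv f)
  then obtain l b where lb: "l \<noteq> 0" "f = affmap l b" and fA: "\<forall>x. f x \<in> A \<longleftrightarrow> x \<in> A" by blast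
  have e: "inv f = affmap (1/l) (- ((1/l) *s b))" using lb affmap_inv by simp
  have fi0: "f (affmap (1/l) (- ((1/l) *s b)) x) = x" for x
    unfolding lb(2) using lb(1) by (simp add: affmap_def vec_eq_iff field_simps)
  have fi: "f (inv f x) = x" for x unfolding e by (rule fi0)
  have iA0: "inv f x \<in> A \<longleftrightarrow> x \<in> A" for x using fA fi[of x] by metis
  have iA: "\<forall>x. inv f x \<in> A \<longleftrightarrow> x \<in> A" using iA0 by blast
  have l0: "1/l \<noteq> 0" using lb(1) by simp
  have iex: "\<exists>la ba. la \<noteq> 0 \<and> inv f = affmap la ba"
    by (rule exI[of _ "1/l"], rule exI[of _ "- ((1/l) *s b)"]) (simp only: l0 e simp_thms)
  show ?case by (rule conjI[OF iex iA])
next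
  case (gen_comp f g)
  then obtain l b m c where lb: "l \<noteq> 0" "f = affmap l b" "m \<noteq> 0" "g = affmap m c"
    and fA: "\<forall>x. f x \<in> A \<longleftrightarrow> x \<in> A" and gA: "\<forall>x. g x \<in> A \<longleftrightarrow> x \<in> A" by blast
  have e: "f \<circ> g = affmap (l*m) (l *s c + b)" using lb affmap_comp by simp
  have lm: "l*m \<noteq> 0" using lb by simp
  have iex: "\<exists>la ba. la \<noteq> 0 \<and> f \<circ> g = affmap la ba"
    by (rule exI[of _ "l*m"], rule exI[of _ "l *s c + b"]) (simp only: lm e simp_thms)
  have cA: "\<forall>x. (f \<circ> g) x \<in> A \<longleftrightarrow> x \<in> A" using fA gA by simp
  show ?case by (rule conjI[OF iex cA])
qed

lemma fix_comb:
  assumes "l \<noteq> 1" "l *s c + b = (c::complex^'n)"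
  shows "c = (1 - 1/(1-l)) *s x + (1/(1-l)) *s (l *s x + b)"
proof -
  have "b $ i = c $ i - l * c $ i" for i
    using assms(2) by (simp add: vec_eq_iff) (metis add_diff_cancel_left')
  then show ?thesis using assms(1)
    by (simp add: vec_eq_iff field_simps)
qed

lemma homot_not_transl:
  fixes a :: "complex^'n"
  assumes "l \<noteq> 1"
  shows "homot a l \<notin> Transl"
proof
  assume "homot a l \<in> Transl"
  then obtain b where h: "homot a l = affmap 1 b" by (auto simp: Transl_def)
  have "homot a l a = affmap 1 b a" using h by simp
  then have b0: "b = 0" by (simp add: homot_def affmap_def)
  have "homot a l (a + 1) = affmap 1 b (a + 1)" using h by simp
  then have "l *s (1::complex^'n) = 1" using b0 by (simp add: homot_def affmap_def)
  then have "l = 1" by (simp add: vec_eq_iff)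
  then show False using assms by simp
qed

theorem lemma2p7:
  fixes p :: nat and a :: "nat \<Rightarrow> complex^'n" and lam :: "nat \<Rightarrow> complex"
  assumes "\<forall>i\<in>{1..p}. lam i \<noteq> 0 \<and> lam i \<noteq> 1"
    and "\<forall>i\<in>{1..p}. homot (a i) (lam i) \<notin> SR"
  shows "E_of (gen_group ((\<lambda>i. homot (a i) (lam i)) ` {1..p})) = caffine hull (a ` {1..p})"
proof -
  define S where "S = (\<lambda>i. homot (a i) (lam i)) ` {1..p}"
  define A where "A = caffine hull (a ` {1..p})"
  have cA: "caffine A" unfolding A_def by (rule caffine_hull)
  have aA: "a i \<in> A" if "i \<in> {1..p}" for i
    unfolding A_def using that by (simp add: hull_inc)
  have hS: "(\<exists>l b. l \<noteq> 0 \<and> f = affmap l b) \<and> (\<forall>x. f x \<in> A \<longleftrightarrow> x \<in> A)" if "f \<in> S" for f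
  proof -
    obtain i where i: "i \<in> {1..p}" "f = homot (a i) (lam i)" using \<open>f \<in> S\<close> S_def by auto
    show ?thesis using i assms(1) homot_affmap homot_in[OF cA aA] by metis
  qed
  have GA: "Gamma (gen_group S) \<subseteq> A"
  proof
    fix c assume "c \<in> Gamma (gen_group S)"
    then obtain g where g: "g \<in> gen_group S" "g \<notin> Transl" "g c = c" by (auto simp: Gamma_def)
    show "c \<in> A"
    proof (cases "p = 0")
      case True
      then have "S = {}" by (simp add: S_def)
      then have "g = id" using g gen_empty by blast
      then show ?thesis using g(2) affmap_id by (auto simp: Transl_def)
    next
      case False
      then have a1: "a 1 \<in> A" using aA by simp
      obtain l b where lb: "l \<noteq> 0" "g = affmap l b" and gA: "\<forall>x. g x \<in> A \<longleftrightarrow> x \<in> A"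
        using gen_inv_prop[OF g(1) hS] by blast
      have l1: "l \<noteq> 1" using g(2) lb by (auto simp: Transl_def)
      have "l *s c + b = c" using g(3) lb by (simp add: affmap_def)
      then have "c = (1 - 1/(1-l)) *s a 1 + (1/(1-l)) *s g (a 1)"
        using fix_comb[OF l1] lb by (simp add: affmap_def)
      then show ?thesis using cA a1 gA unfolding caffine_def by metis
    qed
  qed
  have AG: "a ` {1..p} \<subseteq> Gamma (gen_group S)"
  proof
    fix y assume "y \<in> a ` {1..p}"
    then obtain i where i: "i \<in> {1..p}" "y = a i" by auto
    have "homot (a i) (lam i) \<in> gen_group S" using i S_def by (auto intro: gen_base)
    moreover have "homot (a i) (lam i) \<notin> Transl" using homot_not_transl assms(1) i by blast
    moreover have "homot (a i) (lam i) (a i) = a i" by (simp add: homot_def)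
    ultimately show "y \<in> Gamma (gen_group S)" using i by (auto simp: Gamma_def)
  qed
  have "E_of (gen_group S) = A"
  proof
    show "E_of (gen_group S) \<subseteq> A" unfolding E_of_def using GA cA by (rule hull_minimal)
    show "A \<subseteq> E_of (gen_group S)" unfolding E_of_def A_def using AG by (rule hull_mono)
  qed
  then show ?thesis by (simp add: S_def A_def)
qed

end
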